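(* Let $v$ satisfy the standing assumptions and the doubling condition. Let $f(z)=\sum_k a_{n_k}z^{n_k}$ be a holomorphic function in $\mathbb{D}$ given by a Hadamard gap series ($n_k$ positive integers, $n_{k+1}\ge\lambda n_k$, $\lambda>1$). If $\operatorname{Re}f\in k^\infty_v$, then $\operatorname{Re}f\in h^\infty_v$ and $\operatorname{Im}f\in h^\infty_v$.
   Context: Standing assumptions: $v:[0,1)\to[1,\infty)$ is positive, increasing, continuous, $v(0)=1$, $\lim_{r\to1}v(r)=+\infty$. Doubling condition: there is $D\ge1$ with $v(1-d)\le D\,v(1-2d)$ for all $d\in(0,1/2]$. $k^\infty_v$ is the set of real harmonic $u$ on $\mathbb{D}$ with $u(z)\le Kv(|z|)$ for some $K>0$; $h^\infty_v$ is the set of real harmonic $u$ on $\mathbb{D}$ with $|u(z)|\le Kv(|z|)$ for some $K>0$. *)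

theory Defs
  imports "HOL-Analysis.Analysis"
begin

definition harmonic_on :: "complex set \<Rightarrow> (complex \<Rightarrow> real) \<Rightarrow> bool" where
  "harmonic_on S u \<longleftrightarrow>
     (\<exists>ux uy uxx uyy.
        continuous_on S u \<and> continuous_on S ux \<and> continuous_on S uy \<and>
        continuous_on S uxx \<and> continuous_on S uyy \<and>
        (\<forall>z\<in>S. ((\<lambda>t. u (z + complex_of_real t)) has_real_derivative ux z) (at 0)) \<and>
        (\<forall>z\<in>S. ((\<lambda>t. u (z + \<i> * complex_of_real t)) has_real_derivative uy z) (at 0)) \<and>
        (\<forall>z\<in>S. ((\<lambda>t. ux (z + complex_of_real t)) has_real_derivative uxx z) (at 0)) \<and>
        (\<forall>z\<in>S. ((\<lambda>t. uy (z + \<i> * complex_of_real t)) has_real_derivative uyy z) (at 0)) \<and>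
        (\<forall>z\<in>S. uxx z + uyy z = 0))"

text \<open>Standing assumptions on the weight v.\<close>
definition weight :: "(real \<Rightarrow> real) \<Rightarrow> bool" where
  "weight v \<longleftrightarrow>
     (\<forall>r\<in>{0..<1}. v r \<ge> 1) \<and>
     mono_on {0..<1} v \<and>
     continuous_on {0..<1} v \<and>
     v 0 = 1 \<and>
     filterlim v at_top (at_left 1)"

definition doubling :: "(real \<Rightarrow> real) \<Rightarrow> bool" where
  "doubling v \<longleftrightarrow> (\<exists>D\<ge>1. \<forall>d\<in>{0<..1/2}. v (1 - d) \<le> D * v (1 - 2 * d))"

definition k_inf :: "(real \<Rightarrow> real) \<Rightarrow> (complex \<Rightarrow> real) set" where
  "k_inf v = {u. harmonic_on (ball 0 1) u \<and>
                 (\<exists>K>0. \<forall>z\<in>ball 0 1. u z \<le> K * v (norm z))}"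

definition h_inf :: "(real \<Rightarrow> real) \<Rightarrow> (complex \<Rightarrow> real) set" where
  "h_inf v = {u. harmonic_on (ball 0 1) u \<and>
                 (\<exists>K>0. \<forall>z\<in>ball 0 1. \<bar>u z\<bar> \<le> K * v (norm z))}"

end

theory Submission
  imports Defs
begin


lemma dir_deriv:
  fixes g :: "complex \<Rightarrow> complex"
  assumes "(g has_field_derivative g') (at z)"
  shows "((\<lambda>t. Re (g (z + c * complex_of_real t))) has_real_derivative Re (c * g')) (at 0)"
    and "((\<lambda>t. Im (g (z + c * complex_of_real t))) has_real_derivative Im (c * g')) (at 0)"
proof -
  have h: "((\<lambda>t. z + c * complex_of_real t) has_vector_derivative c) (at 0)"
    by (auto intro!: derivative_eq_intros simp: has_vector_derivative_def scaleR_conv_of_real)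
  have "((g \<circ> (\<lambda>t. z + c * complex_of_real t)) has_vector_derivative (c * g')) (at 0)"
    by (rule field_vector_diff_chain_at[OF h]) (use assms in simp)
  then have d: "((\<lambda>t. g (z + c * complex_of_real t)) has_vector_derivative (c * g')) (at 0)"
    by (simp add: o_def)
  show "((\<lambda>t. Re (g (z + c * complex_of_real t))) has_real_derivative Re (c * g')) (at 0)"
    using has_field_derivative_Re[OF d] .
  show "((\<lambda>t. Im (g (z + c * complex_of_real t))) has_real_derivative Im (c * g')) (at 0)"
    using has_field_derivative_Im[OF d] .
qed

definition PS :: "(nat \<Rightarrow> complex) \<Rightarrow> complex \<Rightarrow> complex" where
  "PS c z = (\<Sum>j. c j * z ^ j)"

lemma PS_deriv:
  assumes "\<And>z. norm z < 1 \<Longrightarrow> summable (\<lambda>j. c j * z ^ j)" "norm z < 1"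
  shows "(PS c has_field_derivative PS (diffs c) z) (at z)"
  unfolding PS_def using termdiffs_strong'[of 1 c z] assms by simp

lemma PS_diffs_sum:
  fixes c :: "nat \<Rightarrow> complex"
  assumes "\<And>z. norm z < 1 \<Longrightarrow> summable (\<lambda>j. c j * z ^ j)"
  shows "\<And>z. norm z < 1 \<Longrightarrow> summable (\<lambda>j. diffs c j * z ^ j)"
  using termdiff_converges[of _ 1 c] assms by blast

lemma PS_cont:
  fixes c :: "nat \<Rightarrow> complex"
  assumes "\<And>z. norm z < 1 \<Longrightarrow> summable (\<lambda>j. c j * z ^ j)"
  shows "continuous_on (ball 0 1) (PS c)"
proof (rule continuous_at_imp_continuous_on, intro ballI)
  fix x :: complex assume "x \<in> ball 0 1"
  then have "norm x < 1" by simp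
  from DERIV_isCont[OF PS_deriv[OF assms this]] show "isCont (PS c) x" .
qed

lemma harm:
  fixes b :: "nat \<Rightarrow> complex" and f :: "complex \<Rightarrow> complex"
  assumes sm: "\<And>z. norm z < 1 \<Longrightarrow> summable (\<lambda>j. b j * z ^ j)"
    and eq: "\<And>z. z \<in> ball 0 1 \<Longrightarrow> f z = PS b z"
  shows "harmonic_on (ball 0 1) (\<lambda>z. Re (f z))" "harmonic_on (ball 0 1) (\<lambda>z. Im (f z))"
proof -
  note s1 = PS_diffs_sum[OF sm]
  note s2 = PS_diffs_sum[OF s1]
  have df: "(f has_field_derivative PS (diffs b) z) (at z)" if "z \<in> ball 0 1" for z
    by (rule has_field_derivative_transform_within_open[OF PS_deriv[OF sm], of z "ball 0 1"])
       (use that eq in auto)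
  have d1: "(PS (diffs b) has_field_derivative PS (diffs (diffs b)) z) (at z)" if "z \<in> ball 0 1" for z
    using PS_deriv[OF s1] that by auto
  have cf: "continuous_on (ball 0 1) f"
    using PS_cont[OF sm] eq continuous_on_cong by metis
  have c1: "continuous_on (ball 0 1) (PS (diffs b))" by (rule PS_cont[OF s1])
  have c2: "continuous_on (ball 0 1) (PS (diffs (diffs b)))" by (rule PS_cont[OF s2])
  show "harmonic_on (ball 0 1) (\<lambda>z. Re (f z))"
    unfolding harmonic_on_def
  proof (rule exI[of _ "\<lambda>z. Re (PS (diffs b) z)"], rule exI[of _ "\<lambda>z. - Im (PS (diffs b) z)"],
      rule exI[of _ "\<lambda>z. Re (PS (diffs (diffs b)) z)"], rule exI[of _ "\<lambda>z. - Re (PS (diffs (diffs b)) z)"], intro conjI ballI)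
    show "continuous_on (ball 0 1) (\<lambda>z. Re (f z))" using cf by (intro continuous_intros)
    show "continuous_on (ball 0 1) (\<lambda>z. Re (PS (diffs b) z))" using c1 by (intro continuous_intros)
    show "continuous_on (ball 0 1) (\<lambda>z. - Im (PS (diffs b) z))" using c1 by (intro continuous_intros)
    show "continuous_on (ball 0 1) (\<lambda>z. Re (PS (diffs (diffs b)) z))" using c2 by (intro continuous_intros)
    show "continuous_on (ball 0 1) (\<lambda>z. - Re (PS (diffs (diffs b)) z))" using c2 by (intro continuous_intros)
    fix z :: complex assume z: "z \<in> ball 0 1"
    show "((\<lambda>t. Re (f (z + complex_of_real t))) has_real_derivative Re (PS (diffs b) z)) (at 0)"
      using dir_deriv(1)[OF df[OF z], of 1] by simp
    show "((\<lambda>t. Re (f (z + \<i> * complex_of_real t))) has_real_derivative - Im (PS (diffs b) z)) (at 0)"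
      using dir_deriv(1)[OF df[OF z], of \<i>] by simp
    show "((\<lambda>t. Re (PS (diffs b) (z + complex_of_real t))) has_real_derivative Re (PS (diffs (diffs b)) z)) (at 0)"
      using dir_deriv(1)[OF d1[OF z], of 1] by simp
    show "((\<lambda>t. - Im (PS (diffs b) (z + \<i> * complex_of_real t))) has_real_derivative - Re (PS (diffs (diffs b)) z)) (at 0)"
      using DERIV_minus[OF dir_deriv(2)[OF d1[OF z], of \<i>]] by simp
    show "Re (PS (diffs (diffs b)) z) + - Re (PS (diffs (diffs b)) z) = 0" by simp
  qed
  show "harmonic_on (ball 0 1) (\<lambda>z. Im (f z))"
    unfolding harmonic_on_def
  proof (rule exI[of _ "\<lambda>z. Im (PS (diffs b) z)"], rule exI[of _ "\<lambda>z. Re (PS (diffs b) z)"],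
      rule exI[of _ "\<lambda>z. Im (PS (diffs (diffs b)) z)"], rule exI[of _ "\<lambda>z. - Im (PS (diffs (diffs b)) z)"], intro conjI ballI)
    show "continuous_on (ball 0 1) (\<lambda>z. Im (f z))" using cf by (intro continuous_intros)
    show "continuous_on (ball 0 1) (\<lambda>z. Im (PS (diffs b) z))" using c1 by (intro continuous_intros)
    show "continuous_on (ball 0 1) (\<lambda>z. Re (PS (diffs b) z))" using c1 by (intro continuous_intros)
    show "continuous_on (ball 0 1) (\<lambda>z. Im (PS (diffs (diffs b)) z))" using c2 by (intro continuous_intros)
    show "continuous_on (ball 0 1) (\<lambda>z. - Im (PS (diffs (diffs b)) z))" using c2 by (intro continuous_intros)
    fix z :: complex assume z: "z \<in> ball 0 1"
    show "((\<lambda>t. Im (f (z + complex_of_real t))) has_real_derivative Im (PS (diffs b) z)) (at 0)"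
      using dir_deriv(2)[OF df[OF z], of 1] by simp
    show "((\<lambda>t. Im (f (z + \<i> * complex_of_real t))) has_real_derivative Re (PS (diffs b) z)) (at 0)"
      using dir_deriv(2)[OF df[OF z], of \<i>] by simp
    show "((\<lambda>t. Im (PS (diffs b) (z + complex_of_real t))) has_real_derivative Im (PS (diffs (diffs b)) z)) (at 0)"
      using dir_deriv(2)[OF d1[OF z], of 1] by simp
    show "((\<lambda>t. Re (PS (diffs b) (z + \<i> * complex_of_real t))) has_real_derivative - Im (PS (diffs (diffs b)) z)) (at 0)"
      using dir_deriv(1)[OF d1[OF z], of \<i>] by simp
    show "Im (PS (diffs (diffs b)) z) + - Im (PS (diffs (diffs b)) z) = 0" by simp
  qed
qed



definition Emean :: "nat \<Rightarrow> (real \<Rightarrow> complex) \<Rightarrow> complex" where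
  "Emean N h = (\<Sum>j<N. h (2 * pi * real j / real N)) / of_nat N"

definition ecis :: "int \<Rightarrow> real \<Rightarrow> complex" where
  "ecis p t = cis (real_of_int p * t)"

definition Rz :: "(nat \<Rightarrow> complex) \<Rightarrow> (nat \<Rightarrow> nat) \<Rightarrow> nat set \<Rightarrow> real \<Rightarrow> real" where
  "Rz u n J t = (\<Prod>k\<in>J. 1 + Re (u k * cis (real (n k) * t)))"

lemma Emean_add: "Emean N (\<lambda>t. f t + g t) = Emean N f + Emean N g"
  unfolding Emean_def by (simp add: sum.distrib add_divide_distrib)

lemma Emean_cmult: "Emean N (\<lambda>t. c * f t) = c * Emean N f"
  unfolding Emean_def by (simp add: sum_distrib_left)

lemma cis_eq_1_rat:
  assumes "cis (2 * pi * real_of_int p / real N) = 1" "0 < N"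
  shows "\<exists>m::int. p = m * int N"
proof -
  have "exp (\<i> * complex_of_real (2 * pi * real_of_int p / real N)) = 1"
    using assms(1) by (simp add: cis_conv_exp)
  then obtain m :: int where m: "2 * pi * real_of_int p / real N = of_int (2 * m) * pi"
    by (auto simp: exp_eq_1)
  then have "real_of_int p = real_of_int m * real N" using assms(2)
    by (simp add: field_simps)
  then have "p = m * int N" by (metis of_int_eq_iff of_int_mult of_int_of_nat_eq)
  then show ?thesis by blast
qed

lemma Emean_ecis:
  assumes "0 < N" "\<bar>p\<bar> < int N"
  shows "Emean N (ecis p) = (if p = 0 then 1 else 0)"
proof (cases "p = 0")
  case True
  then show ?thesis using assms by (simp add: Emean_def ecis_def)
next
  case False
  define w where "w = cis (2 * pi * real_of_int p / real N)"
  have pw: "ecis p (2 * pi * real j / real N) = w ^ j" for j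
    unfolding w_def ecis_def Complex.DeMoivre by (simp add: field_simps)
  have w1: "w \<noteq> 1"
  proof
    assume "w = 1"
    then obtain m :: int where m: "p = m * int N" using cis_eq_1_rat[of p N] assms(1) w_def by auto
    then have "m \<noteq> 0" using False by auto
    then have "\<bar>m\<bar> \<ge> 1" by simp
    then have "\<bar>p\<bar> \<ge> int N" unfolding m abs_mult by (simp add: mult_le_cancel_right1)
    with assms(2) show False by simp
  qed
  have wN: "w ^ N = 1"
    unfolding w_def Complex.DeMoivre using assms(1)
    by (simp add: field_simps) (metis Ints_of_int cis_multiple_2pi mult.assoc mult.commute)
  have "(\<Sum>j<N. w ^ j) = 0" using sum_gp_strict[of w N] w1 wN by simp
  then show ?thesis using False by (simp add: Emean_def pw)
qed


lemma Rz_insert_ecis: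
  assumes "finite A" "b \<notin> A"
  shows "complex_of_real (Rz u n (insert b A) t) * ecis p t =
     complex_of_real (Rz u n A t) * ecis p t
     + (u b / 2) * (complex_of_real (Rz u n A t) * ecis (p + int (n b)) t)
     + (cnj (u b) / 2) * (complex_of_real (Rz u n A t) * ecis (p - int (n b)) t)"
proof -
  define w where "w = u b * cis (real (n b) * t)"
  have R: "Rz u n (insert b A) t = (1 + Re w) * Rz u n A t"
    using assms by (simp add: Rz_def w_def)
  have re: "complex_of_real (Re w) = (w + cnj w) / 2"
    by (simp add: complex_add_cnj)
  have e1: "w * ecis p t = u b * ecis (p + int (n b)) t"
    by (simp add: w_def ecis_def cis_mult distrib_right mult.assoc add.commute)
  have e2: "cnj w * ecis p t = cnj (u b) * ecis (p - int (n b)) t"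
    by (simp add: w_def ecis_def cis_cnj cis_mult left_diff_distrib mult.assoc)
  have "complex_of_real (Rz u n (insert b A) t) * ecis p t =
     complex_of_real (Rz u n A t) * ecis p t + complex_of_real (Rz u n A t) * ((w * ecis p t) / 2)
      + complex_of_real (Rz u n A t) * ((cnj w * ecis p t) / 2)"
    unfolding R of_real_mult of_real_add re by (simp add: algebra_simps add_divide_distrib)
  also have "\<dots> = complex_of_real (Rz u n A t) * ecis p t
     + (u b / 2) * (complex_of_real (Rz u n A t) * ecis (p + int (n b)) t)
     + (cnj (u b) / 2) * (complex_of_real (Rz u n A t) * ecis (p - int (n b)) t)"
    unfolding e1 e2 by (simp add: algebra_simps)
  finally show ?thesis .
qed

lemma Emean_Rz_insert:
  assumes "finite A" "b \<notin> A"
  shows "Emean N (\<lambda>t. complex_of_real (Rz u n (insert b A) t) * ecis p t) =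
     Emean N (\<lambda>t. complex_of_real (Rz u n A t) * ecis p t)
     + (u b / 2) * Emean N (\<lambda>t. complex_of_real (Rz u n A t) * ecis (p + int (n b)) t)
     + (cnj (u b) / 2) * Emean N (\<lambda>t. complex_of_real (Rz u n A t) * ecis (p - int (n b)) t)"
  unfolding Rz_insert_ecis[OF assms] Emean_add Emean_cmult ..

definition TT :: "(nat \<Rightarrow> nat) \<Rightarrow> nat set \<Rightarrow> int" where
  "TT n J = int (\<Sum>k\<in>J. n k)"

lemma Emean_supp:
  assumes "finite J" "0 < N" "TT n J < \<bar>p\<bar>" "\<bar>p\<bar> + TT n J < int N"
  shows "Emean N (\<lambda>t. complex_of_real (Rz u n J t) * ecis p t) = 0"
  using assms(1,3,4)
proof (induction J arbitrary: p rule: finite_induct)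
  case empty
  then show ?case using Emean_ecis[OF assms(2), of p] by (simp add: Rz_def TT_def)
next
  case (insert b A)
  have T: "TT n (insert b A) = TT n A + int (n b)" using insert.hyps by (simp add: TT_def)
  have "Emean N (\<lambda>t. complex_of_real (Rz u n A t) * ecis p t) = 0"
    by (rule insert.IH) (use insert.prems T in auto)
  moreover have "Emean N (\<lambda>t. complex_of_real (Rz u n A t) * ecis (p + int (n b)) t) = 0"
    by (rule insert.IH) (use insert.prems T in auto)
  moreover have "Emean N (\<lambda>t. complex_of_real (Rz u n A t) * ecis (p - int (n b)) t) = 0"
    by (rule insert.IH) (use insert.prems T in auto)
  ultimately show ?case unfolding Emean_Rz_insert[OF insert.hyps] by simp
qed


definition gapok :: "(nat \<Rightarrow> nat) \<Rightarrow> nat set \<Rightarrow> bool" where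
  "gapok n J \<longleftrightarrow> (\<forall>m\<in>J. TT n {k\<in>J. k < m} < int (n m) \<and>
      (\<forall>j. j \<noteq> m \<longrightarrow> TT n {k\<in>J. k < m} < \<bar>int (n m) - int (n j)\<bar>))"

definition coefJ :: "(nat \<Rightarrow> complex) \<Rightarrow> (nat \<Rightarrow> nat) \<Rightarrow> nat set \<Rightarrow> int \<Rightarrow> complex" where
  "coefJ u n J q = (if q = 0 then 1 else 0) + (\<Sum>k\<in>J. (if q = int (n k) then cnj (u k) / 2 else 0)
       + (if q = - int (n k) then u k / 2 else 0))"

lemma gapD1: "gapok n J \<Longrightarrow> m \<in> J \<Longrightarrow> TT n {k\<in>J. k < m} < int (n m)"
  unfolding gapok_def by blast

lemma gapD2: "gapok n J \<Longrightarrow> m \<in> J \<Longrightarrow> j \<noteq> m \<Longrightarrow> TT n {k\<in>J. k < m} < \<bar>int (n m) - int (n j)\<bar>"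
  unfolding gapok_def by blast

lemma TT_nonneg: "0 \<le> TT n J" unfolding TT_def by (rule of_nat_0_le_iff)

lemma coefJ_0: assumes "\<forall>k. n k > 0" shows "coefJ u n J 0 = 1"
proof -
  have "(\<Sum>k\<in>J. (if (0::int) = int (n k) then cnj (u k) / 2 else 0)
       + (if (0::int) = - int (n k) then u k / 2 else 0)) = 0"
    proof (intro sum.neutral ballI)
    fix k assume "k \<in> J"
    have "int (n k) \<noteq> 0" using assms by simp
    then show "(if (0::int) = int (n k) then cnj (u k) / 2 else 0) + (if (0::int) = - int (n k) then u k / 2 else 0) = 0" by auto
  qed
  then show ?thesis unfolding coefJ_def by simp
qed

lemma Emean_coef:
  assumes "finite J" "gapok n J" "0 < N" "\<forall>k. n k > 0"
    and "q = 0 \<or> (\<exists>j. q = int (n j) \<or> q = - int (n j))" "\<bar>q\<bar> + TT n J < int N"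
  shows "Emean N (\<lambda>t. complex_of_real (Rz u n J t) * ecis q t) = coefJ u n J q"
  using assms(1,2,5,6)
proof (induction J arbitrary: q rule: finite_linorder_max_induct)
  case empty
  then show ?case using Emean_ecis[OF assms(3), of q] by (simp add: Rz_def TT_def coefJ_def)
next
  case (insert b A)
  have bA: "b \<notin> A" using insert.hyps by auto
  have T: "TT n (insert b A) = TT n A + int (n b)" using insert.hyps bA by (simp add: TT_def)
  have gA: "gapok n A" unfolding gapok_def
  proof (intro ballI conjI allI impI)
    fix m assume m: "m \<in> A"
    have e: "{k \<in> insert b A. k < m} = {k \<in> A. k < m}" using insert.hyps m by auto
    have m': "m \<in> insert b A" using m by simp
    show "TT n {k \<in> A. k < m} < int (n m)"
      using gapD1[OF insert.prems(1) m'] unfolding e .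
    fix j assume "j \<noteq> m"
    show "TT n {k \<in> A. k < m} < \<bar>int (n m) - int (n j)\<bar>"
      using gapD2[OF insert.prems(1) m' \<open>j \<noteq> m\<close>] unfolding e .
  qed
  have Ab: "{k \<in> insert b A. k < b} = A" using insert.hyps by auto
  have b': "b \<in> insert b A" by simp
  have g1: "TT n A < int (n b)"
    using gapD1[OF insert.prems(1) b'] unfolding Ab .
  have g2: "\<And>j. j \<noteq> b \<Longrightarrow> TT n A < \<bar>int (n b) - int (n j)\<bar>"
    using gapD2[OF insert.prems(1) b'] unfolding Ab .
  have nb: "n b > 0" using assms(4) by auto
  have TA: "0 \<le> TT n A" by (rule TT_nonneg)
  have E1: "Emean N (\<lambda>t. complex_of_real (Rz u n A t) * ecis q t) = coefJ u n A q"
    by (rule insert.IH[OF gA insert.prems(2)]) (use insert.prems(3) T in simp)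
  have E0: "Emean N (\<lambda>t. complex_of_real (Rz u n A t) * ecis 0 t) = 1"
    using insert.IH[OF gA, of 0] insert.prems(3) T TA coefJ_0[OF assms(4)] by simp
  have E2: "Emean N (\<lambda>t. complex_of_real (Rz u n A t) * ecis (q + int (n b)) t) =
      (if q = - int (n b) then 1 else 0)"
  proof (cases "q = - int (n b)")
    case True then show ?thesis using E0 by simp
  next
    case False
    have "TT n A < \<bar>q + int (n b)\<bar>"
      using insert.prems(2)
    proof (elim disjE exE)
      assume "q = 0" then show ?thesis using g1 by simp
    next
      fix j assume "q = int (n j)" then show ?thesis using g1 by simp
    next
      fix j assume qj: "q = - int (n j)"
      then have "j \<noteq> b" using False by auto
      then show ?thesis using g2[of j] qj by (simp add: abs_minus_commute)
    qed
    moreover have "\<bar>q + int (n b)\<bar> + TT n A < int N" using insert.prems(3) T by simp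
    ultimately show ?thesis using Emean_supp[OF insert.hyps(1) assms(3)] False by simp
  qed
  have E3: "Emean N (\<lambda>t. complex_of_real (Rz u n A t) * ecis (q - int (n b)) t) =
      (if q = int (n b) then 1 else 0)"
  proof (cases "q = int (n b)")
    case True then show ?thesis using E0 by simp
  next
    case False
    have "TT n A < \<bar>q - int (n b)\<bar>"
      using insert.prems(2)
    proof (elim disjE exE)
      assume "q = 0" then show ?thesis using g1 by simp
    next
      fix j assume qj: "q = int (n j)"
      then have "j \<noteq> b" using False by auto
      then show ?thesis using g2[of j] qj by (simp add: abs_minus_commute)
    next
      fix j assume "q = - int (n j)" then show ?thesis using g1 by simp
    qed
    moreover have "\<bar>q - int (n b)\<bar> + TT n A < int N" using insert.prems(3) T by simp
    ultimately show ?thesis using Emean_supp[OF insert.hyps(1) assms(3)] False by simp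
  qed
  have C: "coefJ u n (insert b A) q = coefJ u n A q + (if q = int (n b) then cnj (u b) / 2 else 0)
       + (if q = - int (n b) then u b / 2 else 0)"
    unfolding coefJ_def using insert.hyps(1) bA by (simp add: sum.insert)
  show ?case unfolding Emean_Rz_insert[OF insert.hyps(1) bA] E1 E2 E3 C by simp
qed


lemma Rz_nonneg:
  assumes "\<And>k. norm (u k) = 1"
  shows "0 \<le> Rz u n J t"
proof -
  have "0 \<le> 1 + Re (u k * cis (real (n k) * t))" for k
  proof -
    have "\<bar>Re (u k * cis (real (n k) * t))\<bar> \<le> norm (u k * cis (real (n k) * t))"
      by (rule abs_Re_le_cmod)
    also have "\<dots> = 1" using assms by (simp add: norm_mult)
    finally show ?thesis by linarith
  qed
  then show ?thesis unfolding Rz_def by (simp add: prod_nonneg)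
qed

lemma Emean_norm_le:
  assumes "\<And>t. 0 \<le> R t" "0 < N"
  shows "norm (Emean N (\<lambda>t. complex_of_real (R t) * ecis p t)) \<le> Re (Emean N (\<lambda>t. complex_of_real (R t) * ecis 0 t))"
proof -
  have "norm (\<Sum>j<N. complex_of_real (R (2 * pi * real j / real N)) * ecis p (2 * pi * real j / real N))
      \<le> (\<Sum>j<N. norm (complex_of_real (R (2 * pi * real j / real N)) * ecis p (2 * pi * real j / real N)))"
    by (rule norm_sum)
  also have "\<dots> = (\<Sum>j<N. R (2 * pi * real j / real N))"
    using assms(1) by (simp add: norm_mult ecis_def)
  finally show ?thesis using assms(2)
    by (simp add: Emean_def ecis_def norm_divide divide_right_mono)
qed

lemma sidon:
  fixes c :: "nat \<Rightarrow> complex" and n :: "nat \<Rightarrow> nat" and B :: real and J :: "nat set"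
  assumes sm: "summable (\<lambda>k. norm (c k))"
    and npos: "\<forall>k. n k > 0" and ninj: "inj n"
    and bound: "\<And>t. Re (\<Sum>k. c k * cis (real (n k) * t)) \<le> B"
    and J: "finite J" "gapok n J"
  shows "(\<Sum>k\<in>J. norm (c k)) \<le> 2 * B"
proof -
  define u where "u k = (if c k = 0 then 1 else c k / complex_of_real (norm (c k)))" for k
  have nu: "norm (u k) = 1" for k by (simp add: u_def norm_divide)
  have cu: "c k * cnj (u k) = complex_of_real (norm (c k))" for k
  proof (cases "c k = 0")
    case True then show ?thesis by (simp add: u_def)
  next
    case False
    have "c k * cnj (c k) = complex_of_real ((norm (c k))^2)"
      by (simp add: complex_mult_cnj cmod_def)
    then show ?thesis using False by (simp add: u_def power2_eq_square field_simps)
  qed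
  define R where "R t = Rz u n J t" for t
  have R0: "0 \<le> R t" for t unfolding R_def by (rule Rz_nonneg[OF nu])
  have key: "(\<Sum>k\<in>J. norm (c k)) \<le> 2 * B + 2 * e" if e: "e > 0" for e
  proof -
    have smn: "summable (\<lambda>k. norm (norm (c k)))" using sm by simp
    obtain K0 where K0: "\<And>K. K \<ge> K0 \<Longrightarrow> norm (\<Sum>i. norm (c (i + K))) < e"
      using suminf_exist_split[OF e sm] by blast
    define K where "K = K0 + Suc (Max (insert 0 J))"
    have JK: "J \<subseteq> {..<K}"
    proof
      fix k assume "k \<in> J"
      then have "k \<le> Max (insert 0 J)" using J(1) by simp
      then show "k \<in> {..<K}" by (simp add: K_def)
    qed
    define N where "N = Suc (nat (TT n J) + (\<Sum>k<K. n k))"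
    have N0: "0 < N" by (simp add: N_def)
    have Nk: "\<bar>int (n k)\<bar> + TT n J < int N" if "k < K" for k
    proof -
      have "n k \<le> (\<Sum>k<K. n k)" using that by (intro member_le_sum) auto
      then have "int (n k) \<le> int (\<Sum>k<K. n k)" by (rule of_nat_mono)
      moreover have "int N = 1 + int (nat (TT n J)) + int (\<Sum>k<K. n k)"
        unfolding N_def of_nat_Suc of_nat_add by simp
      moreover have "int (nat (TT n J)) = TT n J" using TT_nonneg[of n J] by simp
      ultimately show ?thesis by simp
    qed
    define w where "w k = Emean N (\<lambda>t. complex_of_real (R t) * ecis (int (n k)) t)" for k
    have E0: "Emean N (\<lambda>t. complex_of_real (R t) * ecis 0 t) = 1"
    proof -
      have "\<bar>0::int\<bar> + TT n J < int N" using Nk[of 0] by (simp add: K_def)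
      then have "Emean N (\<lambda>t. complex_of_real (R t) * ecis 0 t) = coefJ u n J 0"
        unfolding R_def by (intro Emean_coef[OF J N0 npos]) auto
      then show ?thesis using coefJ_0[OF npos] by simp
    qed
    have wle: "norm (w k) \<le> 1" for k
      using Emean_norm_le[where R = R and N = N and p = "int (n k)"] R0 N0 E0 by (simp add: w_def)
    have wK: "w k = (if k \<in> J then cnj (u k) / 2 else 0)" if "k < K" for k
    proof -
      have "w k = coefJ u n J (int (n k))"
        unfolding w_def R_def
        by (rule Emean_coef[OF J N0 npos]) (use Nk[OF that] in auto)
      also have "\<dots> = (\<Sum>j\<in>J. if k = j then cnj (u j) / 2 else 0)"
      proof -
        have a: "\<And>j. (int (n k) = int (n j)) = (k = j)" using ninj by (auto simp: inj_eq)
        have b: "\<And>j. int (n k) \<noteq> - int (n j)" using npos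
          by (metis add_pos_nonneg less_irrefl neg_eq_iff_add_eq_0 of_nat_0_le_iff of_nat_0_less_iff)
        have nk: "int (n k) \<noteq> 0" using npos by simp
        have a': "\<And>j. (n k = n j) = (k = j)" using ninj by (auto simp: inj_eq)
        have nk': "0 < n k" using npos by simp
        show ?thesis unfolding coefJ_def using nk' by (simp add: a a' b nk)
      qed
      also have "\<dots> = (if k \<in> J then cnj (u k) / 2 else 0)"
        using J(1) by simp
      finally show ?thesis .
    qed
    have smcw: "summable (\<lambda>k. c k * w k)"
      by (rule summable_comparison_test'[OF sm, of 0]) (use wle in \<open>auto simp: norm_mult intro: mult_left_le\<close>)
    define S where "S t = (\<Sum>k. c k * cis (real (n k) * t))" for t
    have smS: "summable (\<lambda>k. c k * cis (real (n k) * t))" for t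
      by (rule summable_comparison_test'[OF sm, of 0]) (auto simp: norm_mult)
    have ES: "Emean N (\<lambda>t. complex_of_real (R t) * S t) = (\<Sum>k. c k * w k)"
    proof -
      have "(\<Sum>j<N. complex_of_real (R (2 * pi * real j / real N)) * S (2 * pi * real j / real N))
         = (\<Sum>j<N. \<Sum>k. complex_of_real (R (2 * pi * real j / real N)) * (c k * cis (real (n k) * (2 * pi * real j / real N))))"
        unfolding S_def by (intro sum.cong refl suminf_mult[symmetric] smS)
      also have "\<dots> = (\<Sum>k. \<Sum>j<N. complex_of_real (R (2 * pi * real j / real N)) * (c k * cis (real (n k) * (2 * pi * real j / real N))))"
        by (rule suminf_sum[symmetric]) (intro summable_mult smS)
      also have "\<dots> = (\<Sum>k. c k * w k * of_nat N)"
      proof (rule arg_cong[where f = suminf], rule ext)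
        fix k
        have "w k * of_nat N = (\<Sum>j<N. complex_of_real (R (2 * pi * real j / real N)) * ecis (int (n k)) (2 * pi * real j / real N))"
          using N0 by (simp add: w_def Emean_def)
        then show "(\<Sum>j<N. complex_of_real (R (2 * pi * real j / real N)) * (c k * cis (real (n k) * (2 * pi * real j / real N)))) = c k * w k * of_nat N"
          by (simp add: mult.assoc ecis_def sum_distrib_left mult.left_commute)
      qed
      finally have "(\<Sum>j<N. complex_of_real (R (2 * pi * real j / real N)) * S (2 * pi * real j / real N))
          = (\<Sum>k. c k * w k) * of_nat N"
        using suminf_mult2[OF smcw, of "of_nat N"] by simp
      then show ?thesis using N0 by (simp add: Emean_def)
    qed
    have ReES: "Re (\<Sum>k. c k * w k) \<le> B"
    proof -
      have "0 \<le> (\<Sum>j<N. (B - Re (S (2 * pi * real j / real N))) * R (2 * pi * real j / real N))"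
      proof (intro sum_nonneg mult_nonneg_nonneg)
        fix j
        show "0 \<le> B - Re (S (2 * pi * real j / real N))" using bound[of "2 * pi * real j / real N"] unfolding S_def by linarith
        show "0 \<le> R (2 * pi * real j / real N)" by (rule R0)
      qed
      also have "\<dots> = B * (\<Sum>j<N. R (2 * pi * real j / real N))
            - Re (\<Sum>j<N. complex_of_real (R (2 * pi * real j / real N)) * S (2 * pi * real j / real N))"
        by (simp add: sum_distrib_left sum_subtractf algebra_simps)
      also have "(\<Sum>j<N. R (2 * pi * real j / real N)) = real N"
        using arg_cong[OF E0, of Re] N0 by (simp add: Emean_def ecis_def)
      also have "Re (\<Sum>j<N. complex_of_real (R (2 * pi * real j / real N)) * S (2 * pi * real j / real N))
           = real N * Re (\<Sum>k. c k * w k)"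
        using arg_cong[OF ES, of Re] N0 by (simp add: Emean_def field_simps)
      finally have "0 \<le> real N * (B - Re (\<Sum>k. c k * w k))" by (simp add: algebra_simps)
      then show ?thesis using N0 by (simp add: zero_le_mult_iff)
    qed
    have split: "(\<Sum>k. c k * w k) = (\<Sum>i. c (i + K) * w (i + K)) + (\<Sum>k<K. c k * w k)"
      by (rule suminf_split_initial_segment[OF smcw])
    have tail: "norm (\<Sum>i. c (i + K) * w (i + K)) < e"
    proof -
      have sK: "summable (\<lambda>i. norm (c (i + K)))" using summable_ignore_initial_segment[OF sm, of K] by simp
      have sKw: "summable (\<lambda>i. norm (c (i + K) * w (i + K)))"
        by (rule summable_comparison_test'[OF sK, of 0]) (use wle in \<open>auto simp: norm_mult intro: mult_left_le\<close>)
      have "norm (\<Sum>i. c (i + K) * w (i + K)) \<le> (\<Sum>i. norm (c (i + K) * w (i + K)))"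
        by (rule summable_norm[OF sKw])
      also have "\<dots> \<le> (\<Sum>i. norm (c (i + K)))"
        by (rule suminf_le[OF _ sKw sK]) (use wle in \<open>auto simp: norm_mult intro: mult_left_le\<close>)
      also have "\<dots> < e" using K0[of K] by (simp add: K_def)
      finally show ?thesis .
    qed
    have head: "(\<Sum>k<K. c k * w k) = (\<Sum>k\<in>J. complex_of_real (norm (c k)) / 2)"
    proof -
      have "(\<Sum>k<K. c k * w k) = (\<Sum>k<K. if k \<in> J then c k * cnj (u k) / 2 else 0)"
        by (intro sum.cong refl) (simp add: wK)
      also have "\<dots> = (\<Sum>k\<in>{..<K} \<inter> J. c k * cnj (u k) / 2)"
        by (rule sum.inter_restrict[symmetric]) simp
      also have "{..<K} \<inter> J = J" using JK by blast
      finally show ?thesis by (simp add: cu)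
    qed
    have "Re (\<Sum>k. c k * w k) \<ge> (\<Sum>k\<in>J. norm (c k)) / 2 - e"
    proof -
      have "Re (\<Sum>k. c k * w k) = Re (\<Sum>i. c (i + K) * w (i + K)) + (\<Sum>k\<in>J. norm (c k)) / 2"
        unfolding split head by (simp add: sum_divide_distrib)
      moreover have "- e \<le> Re (\<Sum>i. c (i + K) * w (i + K))"
        using tail abs_Re_le_cmod[of "\<Sum>i. c (i + K) * w (i + K)"] by linarith
      ultimately show ?thesis by linarith
    qed
    then show ?thesis using ReES by linarith
  qed
  show ?thesis
  proof (rule ccontr)
    assume "\<not> ?thesis"
    then have gt: "(\<Sum>k\<in>J. norm (c k)) > 2 * B" by simp
    then have "0 < ((\<Sum>k\<in>J. norm (c k)) - 2 * B) / 4" by simp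
    from key[OF this] gt show False by (simp add: field_simps)
  qed
qed

lemma n_pow:
  assumes "\<forall>k. real (n (Suc k)) \<ge> lam * real (n k)" "lam \<ge> 0"
  shows "real (n (k + i)) \<ge> lam ^ i * real (n k)"
proof (induction i)
  case 0 then show ?case by simp
next
  case (Suc i)
  have "lam ^ Suc i * real (n k) = lam * (lam ^ i * real (n k))" by simp
  also have "\<dots> \<le> lam * real (n (k + i))" using Suc assms(2) by (intro mult_left_mono) auto
  also have "\<dots> \<le> real (n (k + Suc i))" using assms(1) by simp
  finally show ?case .
qed

lemma n_smono:
  assumes "lam > 1" "\<forall>k. n k > 0" "\<forall>k. real (n (Suc k)) \<ge> lam * real (n k)"
  shows "strict_mono n"
proof -
  have "n k < n (Suc k)" for k
  proof -
    have "real (n k) < lam * real (n k)" using assms(1,2) by simp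
    also have "\<dots> \<le> real (n (Suc k))" using assms(3) by simp
    finally show ?thesis by simp
  qed
  then show ?thesis by (simp add: strict_mono_Suc_iff)
qed

lemma n_diff:
  assumes "lam > 1" "\<forall>k. n k > 0" "\<forall>k. real (n (Suc k)) \<ge> lam * real (n k)" "j \<noteq> m"
  shows "\<bar>real (n m) - real (n j)\<bar> \<ge> (1 - 1 / lam) * real (n m)"
proof (cases "j < m")
  case True
  then obtain p where p: "m = Suc p" "j \<le> p" by (metis less_Suc_eq_le lessE)
  have sm: "strict_mono n" by (rule n_smono[OF assms(1-3)])
  have "n j \<le> n p" using p(2) sm by (simp add: strict_mono_less_eq)
  moreover have "lam * real (n p) \<le> real (n m)" using assms(3) p(1) by simp
  ultimately have "lam * real (n j) \<le> real (n m)" using assms(1)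
    by (smt (verit, best) mult_left_mono of_nat_mono)
  then have "real (n j) \<le> real (n m) / lam" using assms(1) by (simp add: field_simps)
  moreover have "real (n m) / lam \<le> real (n m)" using assms(1)
    by (simp add: divide_le_eq mult_le_cancel_left1 order_less_imp_le)
  ultimately have "\<bar>real (n m) - real (n j)\<bar> = real (n m) - real (n j)" by simp
  moreover have "(1 - 1 / lam) * real (n m) = real (n m) - real (n m) / lam" by (simp add: algebra_simps)
  ultimately show ?thesis using \<open>real (n j) \<le> real (n m) / lam\<close> by linarith
next
  case False
  then have jm: "m < j" using assms(4) by simp
  have sm: "strict_mono n" by (rule n_smono[OF assms(1-3)])
  have "n (Suc m) \<le> n j" using jm sm by (simp add: strict_mono_less_eq)
  moreover have "lam * real (n m) \<le> real (n (Suc m))" using assms(3) by simp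
  ultimately have "lam * real (n m) \<le> real (n j)" by linarith
  moreover have "(1 - 1 / lam) * real (n m) \<le> (lam - 1) * real (n m)"
  proof (rule mult_right_mono)
    have "(lam - 1) - (1 - 1 / lam) = (lam - 1)^2 / lam" using assms(1) by (simp add: field_simps power2_eq_square)
    also have "\<dots> \<ge> 0" using assms(1) by simp
    finally show "1 - 1 / lam \<le> lam - 1" by simp
  qed simp
  ultimately show ?thesis by (simp add: algebra_simps abs_if)
qed

lemma gap_AP:
  assumes lam: "lam > 1" and npos: "\<forall>k. n k > 0" and ng: "\<forall>k. real (n (Suc k)) \<ge> lam * real (n k)"
    and m: "m > 0" and Lm: "lam ^ m \<ge> 1 + 2 * lam / (lam - 1)"
  shows "gapok n ((\<lambda>i. s + m * i) ` {..<M})"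
proof -
  define \<sigma> where "\<sigma> i = s + m * i" for i
  define L where "L = 1 + 2 * lam / (lam - 1)"
  have L1: "L - 1 = 2 * lam / (lam - 1)" by (simp add: L_def)
  have Lpos: "L - 1 > 0" using lam by (simp add: L1)
  have step: "real (n (\<sigma> (Suc i))) \<ge> L * real (n (\<sigma> i))" for i
  proof -
    have "L * real (n (\<sigma> i)) \<le> lam ^ m * real (n (\<sigma> i))"
      using Lm by (intro mult_right_mono) (auto simp: L_def)
    also have "\<dots> \<le> real (n (\<sigma> i + m))" by (rule n_pow[OF ng]) (use lam in simp)
    finally show ?thesis by (simp add: \<sigma>_def algebra_simps)
  qed
  have sumle: "(\<Sum>t<i. real (n (\<sigma> t))) \<le> real (n (\<sigma> i)) / (L - 1)" for i
  proof (induction i)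
    case 0 then show ?case using Lpos by simp
  next
    case (Suc i)
    have "(\<Sum>t<Suc i. real (n (\<sigma> t))) \<le> real (n (\<sigma> i)) / (L - 1) + real (n (\<sigma> i))"
      using Suc by simp
    also have "\<dots> = L * real (n (\<sigma> i)) / (L - 1)" using Lpos by (simp add: field_simps)
    also have "\<dots> \<le> real (n (\<sigma> (Suc i))) / (L - 1)"
      using step[of i] Lpos by (simp add: divide_right_mono)
    finally show ?case .
  qed
  have inj: "inj \<sigma>" using m by (auto simp: inj_def \<sigma>_def)
  show ?thesis unfolding gapok_def \<sigma>_def[symmetric]
  proof (intro ballI conjI allI impI)
    fix x assume "x \<in> \<sigma> ` {..<M}"
    then obtain i where i: "i < M" "x = \<sigma> i" by auto
    have e: "{k \<in> \<sigma> ` {..<M}. k < \<sigma> i} = \<sigma> ` {..<i}"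
    proof -
      have lt: "\<And>t. (\<sigma> t < \<sigma> i) = (t < i)" using m by (simp add: \<sigma>_def)
      show ?thesis
      proof (intro equalityI subsetI)
        fix k assume "k \<in> {k \<in> \<sigma> ` {..<M}. k < \<sigma> i}"
        then obtain t where "k = \<sigma> t" "\<sigma> t < \<sigma> i" by blast
        then show "k \<in> \<sigma> ` {..<i}" using lt by blast
      next
        fix k assume "k \<in> \<sigma> ` {..<i}"
        then obtain t where t: "k = \<sigma> t" "t < i" by blast
        then have "t < M" using i(1) by simp
        then show "k \<in> {k \<in> \<sigma> ` {..<M}. k < \<sigma> i}" using t lt by blast
      qed
    qed
    have T: "real_of_int (TT n {k \<in> \<sigma> ` {..<M}. k < x}) = (\<Sum>t<i. real (n (\<sigma> t)))"
    proof -
      have "(\<Sum>k\<in>\<sigma> ` {..<i}. n k) = (\<Sum>t<i. n (\<sigma> t))"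
        using sum.reindex[OF inj_on_subset[OF inj subset_UNIV[of "{..<i}"]], of n] by (simp add: o_def)
      then show ?thesis unfolding i(2) e TT_def by simp
    qed
    have np: "real (n x) > 0" using npos by simp
    have "real (n x) / (L - 1) = (1 - 1 / lam) * real (n x) / 2"
      using lam by (simp add: L1 field_simps)
    also have "\<dots> < (1 - 1 / lam) * real (n x)"
      using np lam by (simp add: field_simps)
    finally have lt: "real_of_int (TT n {k \<in> \<sigma> ` {..<M}. k < x}) < (1 - 1 / lam) * real (n x)"
      using sumle[of i] i(2) T by simp
    have "(1 - 1 / lam) * real (n x) \<le> real (n x)" using lam np by (simp add: field_simps)
    then show "TT n {k \<in> \<sigma> ` {..<M}. k < x} < int (n x)" using lt by linarith
    fix j assume "j \<noteq> x"
    then have "\<bar>real (n x) - real (n j)\<bar> \<ge> (1 - 1 / lam) * real (n x)"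
      by (intro n_diff[OF lam npos ng]) simp
    then have "real_of_int (TT n {k \<in> \<sigma> ` {..<M}. k < x}) < \<bar>real (n x) - real (n j)\<bar>"
      using lt by linarith
    then show "TT n {k \<in> \<sigma> ` {..<M}. k < x} < \<bar>int (n x) - int (n j)\<bar>"
      by linarith
  qed
qed

lemma sum_residues:
  fixes g :: "nat \<Rightarrow> real"
  assumes m: "m > 0" and g0: "\<And>k. 0 \<le> g k"
    and X: "\<And>s. s < m \<Longrightarrow> (\<Sum>k\<in>(\<lambda>i. s + m * i) ` {..<M}. g k) \<le> X"
  shows "(\<Sum>k<M. g k) \<le> real m * X"
proof -
  define J where "J s = (\<lambda>i. s + m * i) ` {..<M}" for s
  have "(\<Sum>k<M. g k) \<le> (\<Sum>k<M. \<Sum>s<m. if k \<in> J s then g k else 0)"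
  proof (rule sum_mono)
    fix k assume k: "k \<in> {..<M}"
    have "k \<in> J (k mod m)"
    proof -
      have "k div m < M" using k m by (meson div_le_dividend le_less_trans lessThan_iff)
      moreover have "k = k mod m + m * (k div m)" by simp
      ultimately show ?thesis unfolding J_def by blast
    qed
    then have "g k = (if k \<in> J (k mod m) then g k else 0)" by simp
    also have "\<dots> \<le> (\<Sum>s<m. if k \<in> J s then g k else 0)"
      by (rule member_le_sum) (use m g0 in auto)
    finally show "g k \<le> (\<Sum>s<m. if k \<in> J s then g k else 0)" .
  qed
  also have "\<dots> = (\<Sum>s<m. \<Sum>k<M. if k \<in> J s then g k else 0)" by (rule sum.swap)
  also have "\<dots> \<le> (\<Sum>s<m. X)"
  proof (rule sum_mono)
    fix s assume s: "s \<in> {..<m}"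
    have "(\<Sum>k<M. if k \<in> J s then g k else 0) = (\<Sum>k\<in>{..<M} \<inter> J s. g k)"
      by (rule sum.inter_restrict[symmetric]) simp
    also have "\<dots> \<le> (\<Sum>k\<in>J s. g k)"
      by (rule sum_mono2) (use g0 in \<open>auto simp: J_def\<close>)
    also have "\<dots> \<le> X" using X s by (simp add: J_def)
    finally show "(\<Sum>k<M. if k \<in> J s then g k else 0) \<le> X" .
  qed
  finally show ?thesis by simp
qed

lemma gap_bound:
  fixes a :: "nat \<Rightarrow> complex" and n :: "nat \<Rightarrow> nat" and f :: "complex \<Rightarrow> complex"
  assumes lam: "lam > 1" and npos: "\<forall>k. n k > 0" and ng: "\<forall>k. real (n (Suc k)) \<ge> lam * real (n k)"
    and m: "m > 0" and Lm: "lam ^ m \<ge> 1 + 2 * lam / (lam - 1)"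
    and sums: "\<forall>z\<in>ball 0 1. ((\<lambda>k. a k * z ^ n k) sums f z)"
    and Kb: "\<forall>z\<in>ball 0 1. Re (f z) \<le> K * v (norm z)"
    and z: "z \<in> ball 0 1"
  shows "norm (f z) \<le> real m * (2 * (K * v (norm z)))"
proof -
  define \<rho> where "\<rho> = norm z"
  have \<rho>: "0 \<le> \<rho>" "\<rho> < 1" using z by (auto simp: \<rho>_def)
  have smo: "strict_mono n" by (rule n_smono[OF lam npos ng])
  have ninj: "inj n" using smo by (rule strict_mono_imp_inj_on)
  have nk: "k \<le> n k" for k
  proof (induction k)
    case 0 then show ?case by simp
  next
    case (Suc k)
    have "n k < n (Suc k)" using smo by (simp add: strict_mono_def)
    then show ?case using Suc by simp
  qed
  define c where "c k = a k * z ^ n k" for k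
  define r where "r = (1 + \<rho>) / 2"
  have r: "0 < r" "r < 1" "\<rho> < r" using \<rho> by (auto simp: r_def)
  have "complex_of_real r \<in> ball 0 1" using r by simp
  then have "summable (\<lambda>k. a k * complex_of_real r ^ n k)" using sums sums_summable by blast
  then have "convergent (\<lambda>k. a k * complex_of_real r ^ n k)"
    using summable_LIMSEQ_zero convergentI by blast
  then have "Bseq (\<lambda>k. a k * complex_of_real r ^ n k)" by (rule convergent_imp_Bseq)
  then obtain M0 where M0: "M0 > 0" "\<And>k. norm (a k * complex_of_real r ^ n k) \<le> M0"
    by (auto elim!: BseqE)
  define q where "q = \<rho> / r"
  have q: "0 \<le> q" "q < 1" using r \<rho> by (auto simp: q_def)
  have cle: "norm (c k) \<le> M0 * q ^ k" for k
  proof -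
    have "norm (c k) = norm (a k) * r ^ n k * q ^ n k"
      using r by (simp add: c_def norm_mult norm_power q_def \<rho>_def power_divide)
    also have "\<dots> \<le> M0 * q ^ n k"
      using M0(2)[of k] r q by (intro mult_right_mono) (auto simp: norm_mult norm_power abs_of_pos)
    also have "\<dots> \<le> M0 * q ^ k"
      using M0 q nk[of k] by (intro mult_left_mono power_decreasing) auto
    finally show ?thesis .
  qed
  have smc: "summable (\<lambda>k. norm (c k))"
    by (rule summable_comparison_test'[of "\<lambda>k. M0 * q ^ k" 0])
       (use cle q in \<open>auto intro!: summable_mult summable_geometric\<close>)
  have bound: "Re (\<Sum>k. c k * cis (real (n k) * t)) \<le> K * v \<rho>" for t
  proof -
    define w where "w = z * cis t"
    have nw: "norm w = \<rho>" by (simp add: w_def norm_mult \<rho>_def)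
    then have w: "w \<in> ball 0 1" using \<rho> by simp
    have "(\<lambda>k. a k * w ^ n k) = (\<lambda>k. c k * cis (real (n k) * t))"
      by (simp add: w_def c_def power_mult_distrib Complex.DeMoivre mult.assoc)
    then have "(\<Sum>k. c k * cis (real (n k) * t)) = f w"
      using sums w by (metis sums_unique)
    moreover have "Re (f w) \<le> K * v (norm w)" using Kb w by blast
    ultimately show ?thesis using nw by simp
  qed
  have part: "(\<Sum>k<M. norm (c k)) \<le> real m * (2 * (K * v \<rho>))" for M
  proof (rule sum_residues[OF m])
    fix s assume "s < m"
    show "(\<Sum>k\<in>(\<lambda>i. s + m * i) ` {..<M}. norm (c k)) \<le> 2 * (K * v \<rho>)"
      by (rule sidon[OF smc npos ninj bound]) (auto intro: gap_AP[OF lam npos ng m Lm])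
  qed simp
  have "f z = (\<Sum>k. c k)" using sums z by (simp add: c_def sums_unique)
  then have "norm (f z) \<le> (\<Sum>k. norm (c k))" using summable_norm[OF smc] by simp
  also have "\<dots> \<le> real m * (2 * (K * v \<rho>))" by (rule suminf_le_const[OF smc part])
  finally show ?thesis by (simp add: \<rho>_def)
qed

theorem corollary4:
  fixes v :: "real \<Rightarrow> real" and f :: "complex \<Rightarrow> complex"
    and a :: "nat \<Rightarrow> complex" and n :: "nat \<Rightarrow> nat" and lam :: real
  assumes "weight v" and "doubling v"
    and "lam > 1"
    and "\<forall>k. n k > 0"
    and "\<forall>k. real (n (Suc k)) \<ge> lam * real (n k)"
    and "f holomorphic_on ball 0 1"
    and "\<forall>z\<in>ball 0 1. ((\<lambda>k. a k * z ^ n k) sums f z)"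
    and "(\<lambda>z. Re (f z)) \<in> k_inf v"
  shows "(\<lambda>z. Re (f z)) \<in> h_inf v \<and> (\<lambda>z. Im (f z)) \<in> h_inf v"
proof -
  note lam = assms(3) and npos = assms(4) and ng = assms(5) and sums = assms(7)
  obtain K where K: "K > 0" "\<forall>z\<in>ball 0 1. Re (f z) \<le> K * v (norm z)"
    using assms(8) unfolding k_inf_def by blast
  obtain m where mL: "1 + 2 * lam / (lam - 1) < lam ^ m" using real_arch_pow[OF lam] by blast
  have m: "m > 0"
  proof (rule ccontr)
    assume "\<not> m > 0"
    then have "m = 0" by simp
    with mL have "2 * lam / (lam - 1) < 0" by simp
    with lam show False by (simp add: divide_less_0_iff)
  qed
  have smo: "strict_mono n" by (rule n_smono[OF lam npos ng])
  have ninj: "inj n" using smo by (rule strict_mono_imp_inj_on)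
  define b where "b j = (if j \<in> range n then a (inv n j) else 0)" for j
  have bsum: "(\<lambda>j. b j * z ^ j) sums f z" if "z \<in> ball 0 1" for z
  proof -
    have "(\<lambda>k. b (n k) * z ^ n k) sums f z"
      using sums that ninj by (simp add: b_def)
    then show ?thesis
      using sums_mono_reindex[OF smo, of "\<lambda>j. b j * z ^ j"] by (simp add: b_def)
  qed
  have bsm: "\<And>z. norm z < 1 \<Longrightarrow> summable (\<lambda>j. b j * z ^ j)"
    using bsum sums_summable by (metis mem_ball_0)
  have feq: "\<And>z. z \<in> ball 0 1 \<Longrightarrow> f z = PS b z"
    using bsum unfolding PS_def by (metis sums_unique)
  have fb: "norm (f z) \<le> (real m * (2 * K)) * v (norm z)" if "z \<in> ball 0 1" for z
    using gap_bound[OF lam npos ng m less_imp_le[OF mL] sums K(2) that] by (simp add: algebra_simps)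
  have C: "real m * (2 * K) > 0" using m K by simp
  show ?thesis
  proof
    show "(\<lambda>z. Re (f z)) \<in> h_inf v"
      unfolding h_inf_def using harm(1)[OF bsm feq] C fb abs_Re_le_cmod order_trans by blast
    show "(\<lambda>z. Im (f z)) \<in> h_inf v"
      unfolding h_inf_def using harm(2)[OF bsm feq] C fb abs_Im_le_cmod order_trans by blast
  qed
qed

end
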